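(* Let $d\ge 1$, let $\Omega=\operatorname{diag}(\omega_j)_{j=1}^d\in\mathbb{R}^{d\times d}$ with $\omega_j> 0$ for all $j$, let $\omega=\min_j\omega_j$, and let $A\in\mathbb{C}^{d\times d}$ be self-adjoint. Let $0<h\le 1$ and let $\psi_1,\phi\colon\mathbb{R}\to\mathbb{R}$ be even functions such that $\psi_1(\xi)=\operatorname{sinc}(\xi)\phi(\xi)$ for all $\xi\in\mathbb{R}$ and, for constants $c_0,c_1\ge 0$, \[ |\psi_1(\xi)|\le c_0,\qquad |\phi(\xi)|\le c_0,\qquad |\phi(\xi)-1|\le c_1|\xi|\qquad\text{for all }\xi\in\mathbb{R}. \] Assume $\omega\ge \tfrac12 c_0^2\|A\|+1$. Set $\Psi_1=\psi_1(h\Omega)$, $\Phi=\phi(h\Omega)$. For given $q_0,\dot q_0\in\mathbb{C}^d$, define $(q_n,\dot q_n)_{n\ge 0}$ recursively by \begin{align*} q_{n+1} &= \cos(h\Omega) q_n + h\operatorname{sinc}(h\Omega) \dot{q}_n - \tfrac12 h^2 \operatorname{sinc}(h\Omega) \Psi_1 A\Phi q_n,\\ \dot{q}_{n+1} &= -\Omega \sin(h\Omega) q_n + \cos(h\Omega) \dot{q}_n - \tfrac12 h \big( \cos(h\Omega) \Psi_1 A\Phi q_n + \Psi_1 A\Phi q_{n+1}\big), \end{align*} and let $H(q,\dot q)=\tfrac12 \|\Omega q\|^2 + \tfrac12 \|\dot{q}\|^2 + \tfrac12 q^*Aq$. Then \[ \big|H(q_n,\dot{q}_n) - H(q_0,\dot{q}_0)\big|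 \le C \min\big(h,\omega^{-1}\big) + C h^2 \qquad\text{for all } n\in\mathbb{N}, \] with a constant $C$ depending only on $c_0$, $c_1$, $\|A\|$, $\|\Omega q_0\|$ and $\|\dot{q}_0\|$.
   Context: $\|\cdot\|$ is the Euclidean norm on $\mathbb{C}^d$ and, for matrices, the induced operator norm; ${}^*$ denotes conjugate transpose. $\operatorname{sinc}(\xi)=\sin(\xi)/\xi$ for $\xi\ne0$ and $\operatorname{sinc}(0)=1$. For a function $f\colon\mathbb{R}\to\mathbb{R}$, $f(h\Omega)$ denotes the diagonal matrix $\operatorname{diag}(f(h\omega_j))_{j=1}^d$. *)

theory Defs
  imports "HOL-Analysis.Analysis"
begin

text \<open>Vectors in C^d are represented as functions nat => complex (only indices < d matter),
  d x d matrices as nat => nat => complex, and the diagonal matrix Omega by its diagonal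
  w :: nat => real.\<close>

definition sinc :: "real \<Rightarrow> real" where
  "sinc x = (if x = 0 then 1 else sin x / x)"

definition vnorm :: "nat \<Rightarrow> (nat \<Rightarrow> complex) \<Rightarrow> real" where
  "vnorm d v = sqrt (\<Sum>j<d. (cmod (v j))\<^sup>2)"

definition matvec :: "nat \<Rightarrow> (nat \<Rightarrow> nat \<Rightarrow> complex) \<Rightarrow> (nat \<Rightarrow> complex) \<Rightarrow> (nat \<Rightarrow> complex)" where
  "matvec d A v = (\<lambda>i. \<Sum>j<d. A i j * v j)"

definition opnorm :: "nat \<Rightarrow> (nat \<Rightarrow> nat \<Rightarrow> complex) \<Rightarrow> real" where
  "opnorm d A = Sup {vnorm d (matvec d A v) | v. vnorm d v \<le> 1}"

definition selfadjoint :: "nat \<Rightarrow> (nat \<Rightarrow> nat \<Rightarrow> complex) \<Rightarrow> bool" where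
  "selfadjoint d A \<longleftrightarrow> (\<forall>i<d. \<forall>j<d. A i j = cnj (A j i))"

definition omin :: "nat \<Rightarrow> (nat \<Rightarrow> real) \<Rightarrow> real" where
  "omin d w = Min (w ` {..<d})"

definition Omv :: "(nat \<Rightarrow> real) \<Rightarrow> (nat \<Rightarrow> complex) \<Rightarrow> (nat \<Rightarrow> complex)" where
  "Omv w q = (\<lambda>j. complex_of_real (w j) * q j)"

text \<open>H(q, qdot) = 1/2 |Omega q|^2 + 1/2 |qdot|^2 + 1/2 q^* A q
  (q^* A q is real for self-adjoint A; we take its real part).\<close>
definition Ham :: "nat \<Rightarrow> (nat \<Rightarrow> real) \<Rightarrow> (nat \<Rightarrow> nat \<Rightarrow> complex) \<Rightarrow> (nat \<Rightarrow> complex) \<Rightarrow> (nat \<Rightarrow> complex) \<Rightarrow> real" where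
  "Ham d w A q qd = (vnorm d (Omv w q))\<^sup>2 / 2 + (vnorm d qd)\<^sup>2 / 2
      + Re (\<Sum>i<d. cnj (q i) * matvec d A q i) / 2"

definition PAP :: "nat \<Rightarrow> (nat \<Rightarrow> real) \<Rightarrow> (nat \<Rightarrow> nat \<Rightarrow> complex) \<Rightarrow> real \<Rightarrow> (real \<Rightarrow> real) \<Rightarrow> (real \<Rightarrow> real)
    \<Rightarrow> (nat \<Rightarrow> complex) \<Rightarrow> (nat \<Rightarrow> complex)" where
  "PAP d w A h psi1 phi q = (\<lambda>i. complex_of_real (psi1 (h * w i)) *
      (\<Sum>j<d. A i j * (complex_of_real (phi (h * w j)) * q j)))"

definition step :: "nat \<Rightarrow> (nat \<Rightarrow> real) \<Rightarrow> (nat \<Rightarrow> nat \<Rightarrow> complex) \<Rightarrow> real \<Rightarrow> (real \<Rightarrow> real) \<Rightarrow> (real \<Rightarrow> real)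
    \<Rightarrow> (nat \<Rightarrow> complex) \<times> (nat \<Rightarrow> complex) \<Rightarrow> (nat \<Rightarrow> complex) \<times> (nat \<Rightarrow> complex)" where
  "step d w A h psi1 phi qq =
    (let q = fst qq; qd = snd qq;
         g = PAP d w A h psi1 phi q;
         q' = (\<lambda>i. complex_of_real (cos (h * w i)) * q i
                  + complex_of_real (h * sinc (h * w i)) * qd i
                  - complex_of_real (h\<^sup>2 / 2 * sinc (h * w i)) * g i);
         g' = PAP d w A h psi1 phi q';
         qd' = (\<lambda>i. - complex_of_real (w i * sin (h * w i)) * q i
                  + complex_of_real (cos (h * w i)) * qd i
                  - complex_of_real (h / 2) * (complex_of_real (cos (h * w i)) * g i + g' i))
     in (q', qd'))"

primrec traj :: "nat \<Rightarrow> (nat \<Rightarrow> real) \<Rightarrow> (nat \<Rightarrow> nat \<Rightarrow> complex) \<Rightarrow> real \<Rightarrow> (real \<Rightarrow> real) \<Rightarrow> (real \<Rightarrow> real)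
    \<Rightarrow> (nat \<Rightarrow> complex) \<Rightarrow> (nat \<Rightarrow> complex) \<Rightarrow> nat \<Rightarrow> (nat \<Rightarrow> complex) \<times> (nat \<Rightarrow> complex)" where
  "traj d w A h psi1 phi q0 qd0 0 = (q0, qd0)"
| "traj d w A h psi1 phi q0 qd0 (Suc n) = step d w A h psi1 phi (traj d w A h psi1 phi q0 qd0 n)"

end

theory Submission
  imports Defs
begin

lemma cmod_sq_ReIm: "(cmod z)\<^sup>2 = (Re z)\<^sup>2 + (Im z)\<^sup>2"
  by (simp add: cmod_power2)

lemma comp_id:
  fixes q p m m' q' p' q'' :: complex and c sn S w h :: real
  assumes hs: "h*S*w = sn" and cs: "c\<^sup>2 + sn\<^sup>2 = 1"
  and q'_def: "q' = of_real c*q + of_real (h*S)*p - of_real (h\<^sup>2/2*S)*(of_real S*m)"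
  and p'_def: "p' = - of_real (w * sn) * q + of_real c * p - of_real (h/2) * (of_real c * (of_real S * m) + of_real S * m')"
  and q''_def: "q'' = of_real c*q' + of_real (h*S)*p' - of_real (h\<^sup>2/2*S)*(of_real S*m')"
  shows "(cmod (p' - of_real (h/2)*(of_real S*m')))\<^sup>2 + (cmod (of_real w*q'))\<^sup>2 + Re (cnj q'' * m')
       = (cmod (p - of_real (h/2)*(of_real S*m)))\<^sup>2 + (cmod (of_real w*q))\<^sup>2 + Re (cnj q * m')"
proof -
  have s: "sn = h*S*w" using hs by simp
  show ?thesis
    unfolding q''_def q'_def p'_def cmod_sq_ReIm
    apply (simp add: power2_eq_square)
    using cs s by algebra
qed

lemma comp_id2:
  fixes q p m :: complex and c S h :: real
  shows "(cmod p)\<^sup>2 - (cmod (p - of_real (h/2)*(of_real S*m)))\<^sup>2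
     - Re (cnj (of_real c*q + of_real (h*S)*p - of_real (h\<^sup>2/2*S)*(of_real S*m)) * m)
     = - Re (cnj (of_real c * q) * m) + h\<^sup>2/4 * (cmod (of_real S * m))\<^sup>2"
  unfolding cmod_sq_ReIm by (simp add: power2_eq_square algebra_simps)

definition ip :: "nat \<Rightarrow> (nat \<Rightarrow> complex) \<Rightarrow> (nat \<Rightarrow> complex) \<Rightarrow> complex" where
  "ip d x y = (\<Sum>j<d. cnj (x j) * y j)"

definition nsq :: "nat \<Rightarrow> (nat \<Rightarrow> complex) \<Rightarrow> real" where
  "nsq d x = (\<Sum>j<d. (cmod (x j))\<^sup>2)"

lemma vnorm_sq: "(vnorm d x)\<^sup>2 = nsq d x"
  unfolding vnorm_def nsq_def by (simp add: sum_nonneg)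

lemma vnorm_L2: "vnorm d x = L2_set (\<lambda>j. cmod (x j)) {..<d}"
  unfolding vnorm_def L2_set_def by simp

lemma vnorm_nonneg[simp]: "0 \<le> vnorm d x"
  unfolding vnorm_L2 by simp

lemma cs_ip: "cmod (ip d x y) \<le> vnorm d x * vnorm d y"
proof -
  have "cmod (ip d x y) \<le> (\<Sum>j<d. cmod (cnj (x j) * y j))"
    unfolding ip_def by (rule norm_sum)
  also have "\<dots> = (\<Sum>j<d. \<bar>cmod (x j)\<bar> * \<bar>cmod (y j)\<bar>)"
    by (simp add: norm_mult)
  also have "\<dots> \<le> vnorm d x * vnorm d y"
    unfolding vnorm_L2 by (rule L2_set_mult_ineq)
  finally show ?thesis .
qed

lemma vnorm_comp_le:
  assumes "0 \<le> k" "\<And>j. j < d \<Longrightarrow> cmod (x j) \<le> k * cmod (y j)"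
  shows "vnorm d x \<le> k * vnorm d y"
  unfolding vnorm_L2 L2_set_right_distrib[OF assms(1)]
  by (rule L2_set_mono) (use assms in auto)

lemma vnorm_add: "vnorm d (\<lambda>j. x j + y j) \<le> vnorm d x + vnorm d y"
proof -
  have "vnorm d (\<lambda>j. x j + y j) \<le> L2_set (\<lambda>j. cmod (x j) + cmod (y j)) {..<d}"
    unfolding vnorm_L2 by (rule L2_set_mono) (auto simp: norm_triangle_ineq)
  also have "\<dots> \<le> vnorm d x + vnorm d y"
    unfolding vnorm_L2 by (rule L2_set_triangle_ineq)
  finally show ?thesis .
qed

lemma vnorm_diff: "vnorm d (\<lambda>j. x j - y j) \<le> vnorm d x + vnorm d y"
  using vnorm_add[of d x "\<lambda>j. - y j"] by (simp add: vnorm_def)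

lemma vnorm_scale: "vnorm d (\<lambda>j. c * x j) = cmod c * vnorm d x"
proof -
  have "vnorm d (\<lambda>j. c * x j) = L2_set (\<lambda>j. cmod c * cmod (x j)) {..<d}"
    unfolding vnorm_L2 by (simp add: norm_mult)
  also have "\<dots> = cmod c * vnorm d x"
    unfolding vnorm_L2 by (simp add: L2_set_right_distrib)
  finally show ?thesis .
qed

lemma vnorm_eq0: "vnorm d x = 0 \<Longrightarrow> j < d \<Longrightarrow> x j = 0"
  unfolding vnorm_L2 by (simp add: L2_set_eq_0_iff)

lemma opnorm_props:
  shows "vnorm d (matvec d A v) \<le> opnorm d A * vnorm d v" and "0 \<le> opnorm d A"
proof -
  define K where "K = (\<Sum>i<d. \<Sum>j<d. cmod (A i j))"
  define X where "X = {vnorm d (matvec d A v) | v. vnorm d v \<le> 1}"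
  have bnd: "vnorm d (matvec d A u) \<le> K" if "vnorm d u \<le> 1" for u
  proof -
    have "vnorm d (matvec d A u) \<le> (\<Sum>i<d. \<bar>cmod (matvec d A u i)\<bar>)"
      unfolding vnorm_L2 by (rule L2_set_le_sum_abs)
    also have "\<dots> \<le> (\<Sum>i<d. \<Sum>j<d. cmod (A i j))"
    proof (rule sum_mono)
      fix i assume "i \<in> {..<d}"
      have "\<bar>cmod (matvec d A u i)\<bar> \<le> (\<Sum>j<d. cmod (A i j * u j))"
        unfolding matvec_def by (simp add: norm_sum)
      also have "\<dots> \<le> (\<Sum>j<d. cmod (A i j))"
      proof (rule sum_mono)
        fix j assume j: "j \<in> {..<d}"
        have "cmod (u j) \<le> vnorm d u"
          unfolding vnorm_L2 using j by (intro member_le_L2_set) auto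
        then have "cmod (u j) \<le> 1" using that by linarith
        then show "cmod (A i j * u j) \<le> cmod (A i j)"
          by (simp add: norm_mult mult_left_le)
      qed
      finally show "\<bar>cmod (matvec d A u i)\<bar> \<le> (\<Sum>j<d. cmod (A i j))" .
    qed
    finally show ?thesis unfolding K_def .
  qed
  have bdd: "bdd_above X" unfolding X_def using bnd by (auto intro!: bdd_aboveI)
  have z: "vnorm d (matvec d A (\<lambda>_. 0)) = 0" unfolding vnorm_def by (simp add: matvec_def)
  have zin: "0 \<in> X" unfolding X_def
    using z by (auto simp: vnorm_def)
  show nn: "0 \<le> opnorm d A"
    unfolding opnorm_def X_def[symmetric] using zin bdd by (rule cSup_upper)
  show "vnorm d (matvec d A v) \<le> opnorm d A * vnorm d v"
  proof (cases "vnorm d v = 0")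
    case True
    then have "matvec d A v = (\<lambda>_. 0)"
      unfolding matvec_def using vnorm_eq0[OF True] by (auto intro!: sum.neutral)
    then show ?thesis using True z by (simp add: vnorm_def)
  next
    case False
    define t where "t = vnorm d v"
    have tpos: "t > 0" using False vnorm_nonneg[of d v] unfolding t_def by linarith
    define u where "u = (\<lambda>j. complex_of_real (1/t) * v j)"
    have "vnorm d u = 1" unfolding u_def vnorm_scale using tpos by (simp add: t_def norm_divide)
    have mu: "matvec d A u = (\<lambda>i. complex_of_real (1/t) * matvec d A v i)"
      unfolding u_def matvec_def by (simp add: sum_distrib_left algebra_simps)
    have "vnorm d (matvec d A u) \<in> X" unfolding X_def using \<open>vnorm d u = 1\<close> by auto
    then have "vnorm d (matvec d A u) \<le> opnorm d A"
      unfolding opnorm_def X_def[symmetric] using bdd by (rule cSup_upper)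
    then have "vnorm d (matvec d A v) / t \<le> opnorm d A"
      unfolding mu vnorm_scale using tpos by (simp add: norm_divide)
    then show ?thesis using tpos unfolding t_def by (simp add: divide_le_eq mult.commute)
  qed
qed


lemma one_minus_cos_le: "1 - cos (x::real) \<le> \<bar>x\<bar>"
proof -
  have "cos x = 1 - 2 * sin (x/2) ^ 2" using cos_double_sin[of "x/2"] by simp
  moreover have "\<bar>sin (x/2)\<bar> \<le> \<bar>x/2\<bar>" by (rule abs_sin_x_le_abs_x)
  moreover have "\<bar>sin (x/2)\<bar> \<le> 1" by simp
  ultimately have "1 - cos x = 2 * \<bar>sin (x/2)\<bar> * \<bar>sin (x/2)\<bar>" by (simp add: power2_eq_square abs_mult_self_eq)
  also have "\<dots> \<le> 2 * \<bar>x/2\<bar> * 1"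
    using \<open>\<bar>sin (x/2)\<bar> \<le> \<bar>x/2\<bar>\<close> \<open>\<bar>sin (x/2)\<bar> \<le> 1\<close>
    by (intro mult_mono) auto
  finally show ?thesis by simp
qed

lemma abs_sinc_le: "\<bar>sinc x\<bar> \<le> 1"
  unfolding sinc_def using abs_sin_x_le_abs_x[of x]
  by (auto simp: abs_divide divide_le_eq)

lemma hsinc: assumes "w > 0" "h > 0" shows "h * sinc (h * w) * w = sin (h * w)"
  using assms unfolding sinc_def by (simp add: field_simps)

lemma hsinc_bound: assumes "w > 0" "h > 0" shows "\<bar>h * sinc (h * w)\<bar> \<le> 1 / w"
proof -
  have "h * sinc (h * w) = sin (h * w) / w" using hsinc[OF assms] assms by (simp add: field_simps)
  then show ?thesis using assms by (simp add: abs_divide divide_right_mono)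
qed

locale sch =
  fixes d :: nat and w :: "nat \<Rightarrow> real" and A :: "nat \<Rightarrow> nat \<Rightarrow> complex" and h :: real
    and psi1 phi :: "real \<Rightarrow> real" and c0 c1 :: real
  assumes d1: "d \<ge> 1" and wpos: "\<And>j. j < d \<Longrightarrow> w j > 0" and sa: "selfadjoint d A"
    and hpos: "0 < h" and hle: "h \<le> 1" and psi: "\<And>x. psi1 x = sinc x * phi x"
    and c0: "c0 \<ge> 0" and c1: "c1 \<ge> 0" and phib: "\<And>x. \<bar>phi x\<bar> \<le> c0"
    and phi1: "\<And>x. \<bar>phi x - 1\<bar> \<le> c1 * \<bar>x\<bar>"
    and omg: "omin d w \<ge> c0\<^sup>2 * opnorm d A / 2 + 1"
begin

abbreviation "om \<equiv> omin d w"
abbreviation "nA \<equiv> opnorm d A"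
definition "al = c0\<^sup>2 * nA"

lemma nA_nonneg: "0 \<le> nA" by (rule opnorm_props(2))
lemma al_nonneg: "0 \<le> al" unfolding al_def using nA_nonneg by simp
lemma om_le: "j < d \<Longrightarrow> om \<le> w j" unfolding omin_def by (rule Min_le) auto
lemma al_le: "al \<le> 2 * (om - 1)" using omg unfolding al_def by simp
lemma om_ge1: "1 \<le> om" using al_le al_nonneg by simp
lemma om_pos: "0 < om" using om_ge1 by simp
lemma beta_le: "al / om\<^sup>2 \<le> 1/2"
proof -
  have "0 \<le> (om - 2)\<^sup>2" by simp
  then have "2 * (om - 1) \<le> om\<^sup>2 / 2" by (simp add: power2_eq_square algebra_simps)
  then show ?thesis using al_le om_pos by (simp add: divide_le_eq)
qed
lemma al_om: "al / om \<le> 2" using al_le om_pos by (simp add: divide_le_eq)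

definition Phv :: "(nat \<Rightarrow> complex) \<Rightarrow> (nat \<Rightarrow> complex)" where
  "Phv q = (\<lambda>j. complex_of_real (phi (h * w j)) * q j)"
definition Mv :: "(nat \<Rightarrow> complex) \<Rightarrow> (nat \<Rightarrow> complex)" where
  "Mv q = Phv (matvec d A (Phv q))"

lemma PAP_eq: "PAP d w A h psi1 phi q = (\<lambda>i. complex_of_real (sinc (h * w i)) * Mv q i)"
  unfolding PAP_def Mv_def Phv_def matvec_def psi by (simp add: mult.assoc)

lemma Phv_bound: "vnorm d (Phv q) \<le> c0 * vnorm d q"
  unfolding Phv_def by (rule vnorm_comp_le) (auto simp: c0 norm_mult intro!: mult_right_mono phib)

lemma Mv_bound: "vnorm d (Mv q) \<le> al * vnorm d q"
proof -
  have "vnorm d (Mv q) \<le> c0 * vnorm d (matvec d A (Phv q))" unfolding Mv_def by (rule Phv_bound)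
  also have "\<dots> \<le> c0 * (nA * vnorm d (Phv q))"
    by (intro mult_left_mono opnorm_props(1) c0)
  also have "\<dots> \<le> c0 * (nA * (c0 * vnorm d q))"
    by (intro mult_left_mono Phv_bound c0 nA_nonneg)
  finally show ?thesis unfolding al_def by (simp add: power2_eq_square mult_ac)
qed

lemma ipM_bound: "cmod (ip d x (Mv y)) \<le> al * vnorm d x * vnorm d y"
proof -
  have "cmod (ip d x (Mv y)) \<le> vnorm d x * vnorm d (Mv y)" by (rule cs_ip)
  also have "\<dots> \<le> vnorm d x * (al * vnorm d y)" by (intro mult_left_mono Mv_bound) auto
  finally show ?thesis by (simp add: mult_ac)
qed

lemma q_bound: "vnorm d q \<le> vnorm d (Omv w q) / om"
proof -
  have "vnorm d q \<le> (1/om) * vnorm d (Omv w q)"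
  proof (rule vnorm_comp_le)
    fix j assume j: "j < d"
    have "1 \<le> w j / om" using om_le[OF j] om_pos by (simp add: le_divide_eq)
    then have "1 * cmod (q j) \<le> (w j / om) * cmod (q j)" by (rule mult_right_mono) simp
    then have "cmod (q j) \<le> (w j / om) * cmod (q j)" by simp
    then show "cmod (q j) \<le> 1 / om * cmod (Omv w q j)"
      unfolding Omv_def using wpos[OF j] by (simp add: norm_mult)
  qed (use om_pos in auto)
  then show ?thesis by simp
qed

lemma q_bound2: "vnorm d q \<le> vnorm d (Omv w q)"
proof -
  have "vnorm d (Omv w q) / om \<le> vnorm d (Omv w q)"
  proof -
    have "vnorm d (Omv w q) * 1 \<le> vnorm d (Omv w q) * om" by (rule mult_left_mono[OF om_ge1 vnorm_nonneg])
    then show ?thesis using om_pos by (simp add: divide_le_eq)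
  qed
  then show ?thesis using q_bound[of q] by linarith
qed

lemma herm: "ip d x (Mv y) = cnj (ip d y (Mv x))"
proof -
  let ?f = "\<lambda>i. complex_of_real (phi (h * w i))"
  have "ip d x (Mv y) = (\<Sum>i<d. \<Sum>j<d. cnj (x i) * (?f i * (A i j * (?f j * y j))))"
    unfolding ip_def Mv_def Phv_def matvec_def by (simp add: sum_distrib_left)
  also have "\<dots> = (\<Sum>j<d. \<Sum>i<d. cnj (x i) * (?f i * (A i j * (?f j * y j))))" by (rule sum.swap)
  also have "\<dots> = (\<Sum>j<d. \<Sum>i<d. cnj (cnj (y j) * (?f j * (A j i * (?f i * x i)))))"
  proof (intro sum.cong refl)
    fix j i assume "j \<in> {..<d}" "i \<in> {..<d}"
    then have "A i j = cnj (A j i)" using sa unfolding selfadjoint_def by blast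
    then have a: "cnj (A j i) = A i j" by (metis complex_cnj_cnj)
    show "cnj (x i) * (?f i * (A i j * (?f j * y j))) = cnj (cnj (y j) * (?f j * (A j i * (?f i * x i))))"
      by (simp only: complex_cnj_mult complex_cnj_cnj complex_cnj_complex_of_real a) (simp only: mult_ac)
  qed
  also have "\<dots> = cnj (ip d y (Mv x))"
    unfolding ip_def Mv_def Phv_def matvec_def by (simp add: sum_distrib_left)
  finally show ?thesis .
qed

lemma step_fst: "fst (step d w A h psi1 phi (q, p)) = (\<lambda>i. of_real (cos (h * w i)) * q i
    + of_real (h * sinc (h * w i)) * p i - of_real (h\<^sup>2/2 * sinc (h * w i)) * (of_real (sinc (h * w i)) * Mv q i))"
  by (simp add: step_def Let_def PAP_eq)

lemma step_snd: "snd (step d w A h psi1 phi (q, p)) = (\<lambda>i. - of_real (w i * sin (h * w i)) * q i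
    + of_real (cos (h * w i)) * p i - of_real (h/2) * (of_real (cos (h * w i)) * (of_real (sinc (h * w i)) * Mv q i)
    + of_real (sinc (h * w i)) * Mv (fst (step d w A h psi1 phi (q, p))) i))"
  by (simp add: step_def Let_def PAP_eq)

definition rr :: "(nat \<Rightarrow> complex) \<Rightarrow> (nat \<Rightarrow> complex) \<Rightarrow> (nat \<Rightarrow> complex)" where
  "rr q p = (\<lambda>i. p i - of_real (h/2) * (of_real (sinc (h * w i)) * Mv q i))"

definition Inv :: "(nat \<Rightarrow> complex) \<times> (nat \<Rightarrow> complex) \<Rightarrow> real" where
  "Inv st = nsq d (rr (fst st) (snd st)) + nsq d (Omv w (fst st))
     + Re (ip d (fst (step d w A h psi1 phi st)) (Mv (fst st)))"

lemma conserv: "Inv (step d w A h psi1 phi (q, p)) = Inv (q, p)"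
proof -
  define st where "st = step d w A h psi1 phi (q, p)"
  define q' where "q' = fst st"
  define p' where "p' = snd st"
  have st: "st = (q', p')" unfolding q'_def p'_def by simp
  have key: "(cmod (rr q' p' j))\<^sup>2 + (cmod (Omv w q' j))\<^sup>2 + Re (cnj (fst (step d w A h psi1 phi (q', p')) j) * Mv q' j)
     = (cmod (rr q p j))\<^sup>2 + (cmod (Omv w q j))\<^sup>2 + Re (cnj (q j) * Mv q' j)" if j: "j < d" for j
  proof -
    have hs: "h * sinc (h * w j) * w j = sin (h * w j)" by (rule hsinc) (use wpos j hpos in auto)
    have cs: "(cos (h * w j))\<^sup>2 + (sin (h * w j))\<^sup>2 = 1" by simp
    have qj: "q' j = of_real (cos (h * w j)) * q j + of_real (h * sinc (h * w j)) * p j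
       - of_real (h\<^sup>2/2 * sinc (h * w j)) * (of_real (sinc (h * w j)) * Mv q j)"
      unfolding q'_def st_def step_fst by simp
    have pj: "p' j = - of_real (w j * sin (h * w j)) * q j + of_real (cos (h * w j)) * p j
       - of_real (h/2) * (of_real (cos (h * w j)) * (of_real (sinc (h * w j)) * Mv q j)
       + of_real (sinc (h * w j)) * Mv q' j)"
      unfolding p'_def q'_def st_def step_snd by simp
    have q''j: "fst (step d w A h psi1 phi (q', p')) j = of_real (cos (h * w j)) * q' j + of_real (h * sinc (h * w j)) * p' j
       - of_real (h\<^sup>2/2 * sinc (h * w j)) * (of_real (sinc (h * w j)) * Mv q' j)"
      unfolding step_fst by simp
    show ?thesis using comp_id[OF hs cs qj pj q''j] by (simp add: rr_def Omv_def)
  qed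
  have "Inv st = (\<Sum>j<d. (cmod (rr q' p' j))\<^sup>2 + (cmod (Omv w q' j))\<^sup>2 + Re (cnj (fst (step d w A h psi1 phi (q', p')) j) * Mv q' j))"
    unfolding Inv_def nsq_def ip_def st by (simp add: sum.distrib)
  also have "\<dots> = (\<Sum>j<d. (cmod (rr q p j))\<^sup>2 + (cmod (Omv w q j))\<^sup>2 + Re (cnj (q j) * Mv q' j))"
    by (rule sum.cong[OF refl]) (rule key, simp)
  also have "\<dots> = nsq d (rr q p) + nsq d (Omv w q) + Re (ip d q (Mv q'))"
    unfolding nsq_def ip_def by (simp add: sum.distrib)
  also have "Re (ip d q (Mv q')) = Re (ip d q' (Mv q))" by (subst herm) simp
  finally show ?thesis unfolding Inv_def st_def q'_def by simp
qed

lemma ham_inv: "2 * Ham d w A q p - Inv (q, p) = Re (ip d q (matvec d A q))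
   - Re (ip d (\<lambda>j. of_real (cos (h * w j)) * q j) (Mv q)) + h\<^sup>2/4 * nsq d (\<lambda>j. of_real (sinc (h * w j)) * Mv q j)"
proof -
  have e1: "2 * Ham d w A q p = nsq d (Omv w q) + nsq d p + Re (ip d q (matvec d A q))"
    unfolding Ham_def vnorm_sq ip_def by simp
  have e2: "Inv (q, p) = nsq d (rr q p) + nsq d (Omv w q) + Re (ip d (fst (step d w A h psi1 phi (q, p))) (Mv q))"
    by (simp add: Inv_def)
  have "nsq d p - nsq d (rr q p) - Re (ip d (fst (step d w A h psi1 phi (q, p))) (Mv q))
     = (\<Sum>j<d. (cmod (p j))\<^sup>2 - (cmod (rr q p j))\<^sup>2 - Re (cnj (fst (step d w A h psi1 phi (q, p)) j) * Mv q j))"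
    unfolding nsq_def ip_def by (simp add: sum_subtractf)
  also have "\<dots> = (\<Sum>j<d. - Re (cnj (of_real (cos (h * w j)) * q j) * Mv q j) + h\<^sup>2/4 * (cmod (of_real (sinc (h * w j)) * Mv q j))\<^sup>2)"
  proof (rule sum.cong[OF refl])
    fix j
    show "(cmod (p j))\<^sup>2 - (cmod (rr q p j))\<^sup>2 - Re (cnj (fst (step d w A h psi1 phi (q, p)) j) * Mv q j)
       = - Re (cnj (of_real (cos (h * w j)) * q j) * Mv q j) + h\<^sup>2/4 * (cmod (of_real (sinc (h * w j)) * Mv q j))\<^sup>2"
      using comp_id2[where q="q j" and p="p j" and m="Mv q j" and c="cos (h * w j)" and S="sinc (h * w j)" and h=h]
      unfolding rr_def step_fst by simp
  qed
  also have "\<dots> = - Re (ip d (\<lambda>j. of_real (cos (h * w j)) * q j) (Mv q)) + h\<^sup>2/4 * nsq d (\<lambda>j. of_real (sinc (h * w j)) * Mv q j)"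
    unfolding nsq_def ip_def by (simp add: sum.distrib sum_distrib_left sum_negf sum_subtractf)
  finally show ?thesis using e1 e2 by linarith
qed

lemma stepq_r: "fst (step d w A h psi1 phi (q, p)) = (\<lambda>j. of_real (cos (h * w j)) * q j + of_real (h * sinc (h * w j)) * rr q p j)"
  unfolding step_fst rr_def by (simp add: fun_eq_iff algebra_simps power2_eq_square)

lemma stepq_norm: "vnorm d (fst (step d w A h psi1 phi (q, p))) \<le> vnorm d q + vnorm d (rr q p) / om"
proof -
  have "vnorm d (fst (step d w A h psi1 phi (q, p)))
      \<le> vnorm d (\<lambda>j. of_real (cos (h * w j)) * q j) + vnorm d (\<lambda>j. of_real (h * sinc (h * w j)) * rr q p j)"
    unfolding stepq_r by (rule vnorm_add)
  also have "vnorm d (\<lambda>j. of_real (cos (h * w j)) * q j) \<le> 1 * vnorm d q"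
    by (rule vnorm_comp_le) (auto simp: norm_mult intro!: mult_left_le_one_le)
  also have "vnorm d (\<lambda>j. of_real (h * sinc (h * w j)) * rr q p j) \<le> (1/om) * vnorm d (rr q p)"
  proof (rule vnorm_comp_le)
    fix j assume j: "j < d"
    have "\<bar>h * sinc (h * w j)\<bar> \<le> 1 / w j" by (rule hsinc_bound) (use wpos j hpos in auto)
    also have "\<dots> \<le> 1 / om" using om_le[OF j] om_pos by (simp add: frac_le)
    finally show "cmod (of_real (h * sinc (h * w j)) * rr q p j) \<le> 1 / om * cmod (rr q p j)"
      unfolding norm_mult norm_of_real by (intro mult_right_mono) auto
  qed (use om_pos in simp)
  finally show ?thesis by simp
qed

lemma re_bound: "\<bar>Re (ip d (fst (step d w A h psi1 phi (q, p))) (Mv q))\<bar>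
   \<le> al / om\<^sup>2 * (vnorm d (Omv w q) + vnorm d (rr q p)) * vnorm d (Omv w q)"
proof -
  define X where "X = vnorm d (Omv w q)"
  define R where "R = vnorm d (rr q p)"
  define Q where "Q = vnorm d q"
  define Q' where "Q' = vnorm d (fst (step d w A h psi1 phi (q, p)))"
  have QX: "Q \<le> X / om" unfolding Q_def X_def by (rule q_bound)
  have Q': "Q' \<le> X / om + R / om" using stepq_norm[of q p] QX unfolding Q'_def Q_def R_def by linarith
  have "\<bar>Re (ip d (fst (step d w A h psi1 phi (q, p))) (Mv q))\<bar> \<le> cmod (ip d (fst (step d w A h psi1 phi (q, p))) (Mv q))"
    by (rule abs_Re_le_cmod)
  also have "\<dots> \<le> al * Q' * Q" unfolding Q'_def Q_def by (rule ipM_bound)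
  also have "\<dots> = al * (Q' * Q)" by simp
  also have "\<dots> \<le> al * ((X / om + R / om) * (X / om))"
    using Q' QX om_pos by (intro mult_left_mono mult_mono al_nonneg) (auto simp: Q_def Q'_def X_def R_def)
  also have "\<dots> = al / om\<^sup>2 * (X + R) * X" using om_pos by (simp add: field_simps power2_eq_square)
  finally show ?thesis unfolding X_def R_def .
qed

lemma inv_bounds:
  "(vnorm d (Omv w q))\<^sup>2 / 4 \<le> Inv (q, p)"
  "Inv (q, p) \<le> 2 * ((vnorm d (rr q p))\<^sup>2 + (vnorm d (Omv w q))\<^sup>2)"
proof -
  define X where "X = vnorm d (Omv w q)"
  define R where "R = vnorm d (rr q p)"
  define b where "b = al / om\<^sup>2"
  have b0: "0 \<le> b" unfolding b_def using al_nonneg by simp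
  have b1: "b \<le> 1/2" unfolding b_def by (rule beta_le)
  have X0: "0 \<le> X" and R0: "0 \<le> R" unfolding X_def R_def by auto
  have I: "Inv (q, p) = R\<^sup>2 + X\<^sup>2 + Re (ip d (fst (step d w A h psi1 phi (q, p))) (Mv q))"
    unfolding Inv_def R_def X_def vnorm_sq by simp
  have rb: "\<bar>Re (ip d (fst (step d w A h psi1 phi (q, p))) (Mv q))\<bar> \<le> b * (X + R) * X"
    unfolding b_def X_def R_def by (rule re_bound)
  have bb: "b * (X + R) * X \<le> (X + R) * X / 2"
  proof -
    have "b * ((X + R) * X) \<le> (1/2) * ((X + R) * X)" using b1 X0 R0 by (intro mult_right_mono) auto
    then show ?thesis by simp
  qed
  have "0 \<le> (R - X/4)\<^sup>2 + X\<^sup>2 * 3 / 16" by simp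
  then show "X\<^sup>2 / 4 \<le> Inv (q, p)" unfolding X_def[symmetric] using I rb bb
    by (simp add: power2_eq_square algebra_simps)
  have "0 \<le> (R - X/4)\<^sup>2 + X\<^sup>2 * 7 / 16" by simp
  then show "Inv (q, p) \<le> 2 * (R\<^sup>2 + X\<^sup>2)" using I rb bb
    by (simp add: power2_eq_square algebra_simps)
qed

lemma rr_bound: "vnorm d (rr q p) \<le> vnorm d p + vnorm d (Omv w q)"
proof -
  have "vnorm d (rr q p) \<le> vnorm d p + vnorm d (\<lambda>j. of_real (h/2) * (of_real (sinc (h * w j)) * Mv q j))"
    unfolding rr_def by (rule vnorm_diff)
  also have "vnorm d (\<lambda>j. of_real (h/2) * (of_real (sinc (h * w j)) * Mv q j)) \<le> (1/2) * vnorm d (Mv q)"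
  proof (rule vnorm_comp_le)
    fix j
    have "\<bar>h/2\<bar> * \<bar>sinc (h * w j)\<bar> \<le> 1/2 * 1"
      using hpos hle abs_sinc_le[of "h * w j"] by (intro mult_mono) auto
    then show "cmod (of_real (h/2) * (of_real (sinc (h * w j)) * Mv q j)) \<le> 1/2 * cmod (Mv q j)"
      unfolding norm_mult norm_of_real mult.assoc[symmetric] by (intro mult_right_mono) auto
  qed simp
  also have "vnorm d (Mv q) \<le> al * (vnorm d (Omv w q) / om)"
    using Mv_bound[of q] q_bound[of q] al_nonneg by (meson mult_left_mono order_trans)
  also have "al * (vnorm d (Omv w q) / om) = (al / om) * vnorm d (Omv w q)" by simp
  also have "\<dots> \<le> 2 * vnorm d (Omv w q)" by (intro mult_right_mono al_om) simp
  finally show ?thesis by simp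
qed

lemma ip_diff_left: "ip d (\<lambda>j. x j - y j) z = ip d x z - ip d y z"
  unfolding ip_def by (simp add: sum_subtractf algebra_simps)

lemma ip_diff_right: "ip d x (\<lambda>j. y j - z j) = ip d x y - ip d x z"
  unfolding ip_def by (simp add: sum_subtractf algebra_simps)

lemma matvec_diff: "matvec d A (\<lambda>j. x j - y j) = (\<lambda>i. matvec d A x i - matvec d A y i)"
  unfolding matvec_def by (simp add: sum_subtractf algebra_simps)

lemma e_bounds:
  "\<bar>1 - phi x * cos x\<bar> \<le> (c0 + c1) * \<bar>x\<bar>" "\<bar>1 - phi x * cos x\<bar> \<le> 1 + c0"
  "\<bar>1 - phi x\<bar> \<le> (c0 + c1) * \<bar>x\<bar>" "\<bar>1 - phi x\<bar> \<le> 1 + c0"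
proof -
  have a: "\<bar>1 - phi x\<bar> \<le> c1 * \<bar>x\<bar>" using phi1[of x] by (simp add: abs_minus_commute)
  have b: "\<bar>phi x\<bar> \<le> c0" by (rule phib)
  have c: "0 \<le> 1 - cos x" "1 - cos x \<le> \<bar>x\<bar>" using one_minus_cos_le[of x] by auto
  have "\<bar>phi x * (1 - cos x)\<bar> = \<bar>phi x\<bar> * (1 - cos x)" using c by (simp add: abs_mult)
  also have "\<dots> \<le> c0 * \<bar>x\<bar>" using b c c0 by (intro mult_mono) auto
  finally have d: "\<bar>phi x * (1 - cos x)\<bar> \<le> c0 * \<bar>x\<bar>" .
  have "1 - phi x * cos x = (1 - phi x) + phi x * (1 - cos x)" by (simp add: algebra_simps)
  then have "\<bar>1 - phi x * cos x\<bar> \<le> \<bar>1 - phi x\<bar> + \<bar>phi x * (1 - cos x)\<bar>" by (metis abs_triangle_ineq)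
  then show "\<bar>1 - phi x * cos x\<bar> \<le> (c0 + c1) * \<bar>x\<bar>" using a d by (simp add: algebra_simps)
  have "\<bar>phi x * cos x\<bar> \<le> c0 * 1" unfolding abs_mult using b c0 by (intro mult_mono) auto
  then show "\<bar>1 - phi x * cos x\<bar> \<le> 1 + c0" by linarith
  show "\<bar>1 - phi x\<bar> \<le> (c0 + c1) * \<bar>x\<bar>" using a c0 by (smt (verit) abs_ge_zero mult_right_mono)
  show "\<bar>1 - phi x\<bar> \<le> 1 + c0" using b by linarith
qed

definition "mu = (1 + c0 + c1) * min h (1 / om)"

lemma mu_nonneg: "0 \<le> mu" unfolding mu_def using c0 c1 hpos om_pos by auto

lemma mu_comp: assumes j: "j < d" and e1: "\<bar>e\<bar> \<le> (c0 + c1) * \<bar>h * w j\<bar>" and e2: "\<bar>e\<bar> \<le> 1 + c0"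
  shows "\<bar>e\<bar> \<le> mu * w j"
proof (cases "h \<le> 1 / om")
  case True
  then have "mu = (1 + c0 + c1) * h" unfolding mu_def by simp
  moreover have "(c0 + c1) * \<bar>h * w j\<bar> \<le> (1 + c0 + c1) * (h * w j)"
    using wpos[OF j] hpos by (simp add: abs_mult mult_right_mono)
  ultimately show ?thesis using e1 by (simp add: mult.assoc)
next
  case False
  then have "mu = (1 + c0 + c1) * (1 / om)" unfolding mu_def by simp
  moreover have "1 \<le> w j / om" using om_le[OF j] om_pos by (simp add: le_divide_eq)
  then have "(1 + c0) * 1 \<le> (1 + c0 + c1) * (w j / om)" using c0 c1 by (intro mult_mono) auto
  ultimately show ?thesis using e2 by simp
qed

lemma D_bound: "\<bar>2 * Ham d w A q p - Inv (q, p)\<bar> \<le> (nA * (1 + c0) * mu + h\<^sup>2 * al\<^sup>2 / 4) * (vnorm d (Omv w q))\<^sup>2"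
proof -
  define X where "X = vnorm d (Omv w q)"
  define Q where "Q = vnorm d q"
  have X0: "0 \<le> X" and Q0: "0 \<le> Q" unfolding X_def Q_def by auto
  have QX: "Q \<le> X" unfolding Q_def X_def by (rule q_bound2)
  define u where "u = (\<lambda>j. of_real (phi (h * w j)) * (of_real (cos (h * w j)) * q j))"
  define v where "v = Phv q"
  have iu: "ip d (\<lambda>j. of_real (cos (h * w j)) * q j) (Mv q) = ip d u (matvec d A v)"
    unfolding ip_def Mv_def Phv_def u_def v_def by (intro sum.cong refl) (simp add: mult_ac)
  have spl: "ip d q (matvec d A q) - ip d u (matvec d A v)
      = ip d (\<lambda>j. q j - u j) (matvec d A q) + ip d u (matvec d A (\<lambda>j. q j - v j))"
    by (simp add: ip_diff_left ip_diff_right matvec_diff)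
  have Omv_j: "cmod (Omv w q j) = w j * cmod (q j)" if "j < d" for j
    unfolding Omv_def using wpos[OF that] by (simp add: norm_mult)
  have b1: "vnorm d (\<lambda>j. q j - u j) \<le> mu * X"
    unfolding X_def
  proof (rule vnorm_comp_le[OF mu_nonneg])
    fix j assume j: "j < d"
    have "q j - u j = of_real (1 - phi (h * w j) * cos (h * w j)) * q j" unfolding u_def by (simp add: algebra_simps)
    then have "cmod (q j - u j) = \<bar>1 - phi (h * w j) * cos (h * w j)\<bar> * cmod (q j)" by (simp only: norm_mult norm_of_real)
    also have "\<dots> \<le> (mu * w j) * cmod (q j)"
      by (rule mult_right_mono[OF mu_comp[OF j e_bounds(1)[of "h * w j"] e_bounds(2)[of "h * w j"]]]) simp
    finally show "cmod (q j - u j) \<le> mu * cmod (Omv w q j)" using Omv_j[OF j] by (simp add: mult_ac)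
  qed
  have b2: "vnorm d (\<lambda>j. q j - v j) \<le> mu * X"
    unfolding X_def
  proof (rule vnorm_comp_le[OF mu_nonneg])
    fix j assume j: "j < d"
    have "q j - v j = of_real (1 - phi (h * w j)) * q j" unfolding v_def Phv_def by (simp add: algebra_simps)
    then have "cmod (q j - v j) = \<bar>1 - phi (h * w j)\<bar> * cmod (q j)" by (simp only: norm_mult norm_of_real)
    also have "\<dots> \<le> (mu * w j) * cmod (q j)"
      by (rule mult_right_mono[OF mu_comp[OF j e_bounds(3)[of "h * w j"] e_bounds(4)[of "h * w j"]]]) simp
    finally show "cmod (q j - v j) \<le> mu * cmod (Omv w q j)" using Omv_j[OF j] by (simp add: mult_ac)
  qed
  have b3: "vnorm d u \<le> c0 * Q"
    unfolding Q_def u_def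
  proof (rule vnorm_comp_le[OF c0])
    fix j
    have "\<bar>phi (h * w j)\<bar> * \<bar>cos (h * w j)\<bar> \<le> c0 * 1" using phib c0 by (intro mult_mono) auto
    then show "cmod (of_real (phi (h * w j)) * (of_real (cos (h * w j)) * q j)) \<le> c0 * cmod (q j)"
      unfolding norm_mult norm_of_real mult.assoc[symmetric] by (intro mult_right_mono) auto
  qed
  have t1: "cmod (ip d (\<lambda>j. q j - u j) (matvec d A q)) \<le> (mu * X) * (nA * Q)"
  proof -
    have "cmod (ip d (\<lambda>j. q j - u j) (matvec d A q)) \<le> vnorm d (\<lambda>j. q j - u j) * vnorm d (matvec d A q)" by (rule cs_ip)
    also have "\<dots> \<le> (mu * X) * (nA * Q)" unfolding Q_def
      using b1 opnorm_props(1)[of d A q] mu_nonneg X0 by (intro mult_mono) auto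
    finally show ?thesis .
  qed
  have t2: "cmod (ip d u (matvec d A (\<lambda>j. q j - v j))) \<le> (c0 * Q) * (nA * (mu * X))"
  proof -
    have "cmod (ip d u (matvec d A (\<lambda>j. q j - v j))) \<le> vnorm d u * vnorm d (matvec d A (\<lambda>j. q j - v j))" by (rule cs_ip)
    also have "vnorm d (matvec d A (\<lambda>j. q j - v j)) \<le> nA * (mu * X)"
      using opnorm_props(1)[of d A "\<lambda>j. q j - v j"] b2 nA_nonneg by (meson mult_left_mono order_trans)
    then have "vnorm d u * vnorm d (matvec d A (\<lambda>j. q j - v j)) \<le> (c0 * Q) * (nA * (mu * X))"
      using b3 nA_nonneg mu_nonneg X0 c0 Q0 by (intro mult_mono) auto
    finally show ?thesis .
  qed
  have T1: "\<bar>Re (ip d q (matvec d A q)) - Re (ip d (\<lambda>j. of_real (cos (h * w j)) * q j) (Mv q))\<bar>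
      \<le> nA * (1 + c0) * mu * X\<^sup>2"
  proof -
    have "\<bar>Re (ip d q (matvec d A q)) - Re (ip d (\<lambda>j. of_real (cos (h * w j)) * q j) (Mv q))\<bar>
       = \<bar>Re (ip d q (matvec d A q) - ip d u (matvec d A v))\<bar>" by (simp add: iu)
    also have "\<dots> \<le> cmod (ip d q (matvec d A q) - ip d u (matvec d A v))" by (rule abs_Re_le_cmod)
    also have "\<dots> \<le> cmod (ip d (\<lambda>j. q j - u j) (matvec d A q)) + cmod (ip d u (matvec d A (\<lambda>j. q j - v j)))"
      unfolding spl by (rule norm_triangle_ineq)
    also have "\<dots> \<le> (mu * X) * (nA * Q) + (c0 * Q) * (nA * (mu * X))" using t1 t2 by linarith
    also have "\<dots> = (nA * (1 + c0) * mu * X) * Q" by (simp add: algebra_simps)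
    also have "\<dots> \<le> (nA * (1 + c0) * mu * X) * X"
      using QX nA_nonneg c0 mu_nonneg X0 by (intro mult_left_mono) auto
    finally show ?thesis by (simp add: power2_eq_square mult_ac)
  qed
  have T2: "nsq d (\<lambda>j. of_real (sinc (h * w j)) * Mv q j) \<le> al\<^sup>2 * X\<^sup>2"
  proof -
    have "vnorm d (\<lambda>j. of_real (sinc (h * w j)) * Mv q j) \<le> 1 * vnorm d (Mv q)"
      by (rule vnorm_comp_le) (auto simp: norm_mult intro!: mult_left_le_one_le abs_sinc_le)
    also have "\<dots> \<le> al * Q" unfolding Q_def using Mv_bound by simp
    also have "\<dots> \<le> al * X" using QX al_nonneg by (rule mult_left_mono)
    finally have "vnorm d (\<lambda>j. of_real (sinc (h * w j)) * Mv q j) \<le> al * X" .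
    then have "(vnorm d (\<lambda>j. of_real (sinc (h * w j)) * Mv q j))\<^sup>2 \<le> (al * X)\<^sup>2"
      by (intro power_mono) auto
    then show ?thesis by (simp add: vnorm_sq power_mult_distrib)
  qed
  have N: "0 \<le> nsq d (\<lambda>j. of_real (sinc (h * w j)) * Mv q j)" unfolding nsq_def by (simp add: sum_nonneg)
  have "h\<^sup>2/4 * nsq d (\<lambda>j. of_real (sinc (h * w j)) * Mv q j) \<le> h\<^sup>2/4 * (al\<^sup>2 * X\<^sup>2)"
    using T2 by (intro mult_left_mono) auto
  then have T3: "\<bar>h\<^sup>2/4 * nsq d (\<lambda>j. of_real (sinc (h * w j)) * Mv q j)\<bar> \<le> h\<^sup>2 * al\<^sup>2 / 4 * X\<^sup>2"
    using N by simp
  have "\<bar>2 * Ham d w A q p - Inv (q, p)\<bar> \<le> \<bar>Re (ip d q (matvec d A q)) - Re (ip d (\<lambda>j. of_real (cos (h * w j)) * q j) (Mv q))\<bar>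
      + \<bar>h\<^sup>2/4 * nsq d (\<lambda>j. of_real (sinc (h * w j)) * Mv q j)\<bar>"
    unfolding ham_inv by (rule abs_triangle_ineq)
  also have "\<dots> \<le> nA * (1 + c0) * mu * X\<^sup>2 + h\<^sup>2 * al\<^sup>2 / 4 * X\<^sup>2" using T1 T3 by (rule add_mono)
  also have "\<dots> = (nA * (1 + c0) * mu + h\<^sup>2 * al\<^sup>2 / 4) * X\<^sup>2" by (simp add: distrib_right)
  finally show ?thesis unfolding X_def .
qed

lemma inv_traj: "Inv (traj d w A h psi1 phi q0 qd0 n) = Inv (q0, qd0)"
proof (induction n)
  case (Suc n)
  let ?st = "traj d w A h psi1 phi q0 qd0 n"
  have "Inv (step d w A h psi1 phi ?st) = Inv ?st"
    using conserv[of "fst ?st" "snd ?st"] by simp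
  then show ?case using Suc by simp
qed simp

lemma main:
  assumes tr: "traj d w A h psi1 phi q0 qd0 n = (q, qd)"
  defines "E \<equiv> 16 * (vnorm d qd0 + vnorm d (Omv w q0))\<^sup>2"
  defines "K \<equiv> (nA * (1 + c0) * (1 + c0 + c1) + c0 ^ 4 * nA\<^sup>2 / 4) * E"
  shows "\<bar>Ham d w A q qd - Ham d w A q0 qd0\<bar> \<le> K * min h (1 / om) + K * h\<^sup>2"
proof -
  define X0 where "X0 = vnorm d (Omv w q0)"
  define P0 where "P0 = vnorm d qd0"
  define R0 where "R0 = vnorm d (rr q0 qd0)"
  define Xn where "Xn = vnorm d (Omv w q)"
  have X00: "0 \<le> X0" and P00: "0 \<le> P0" and R00: "0 \<le> R0" unfolding X0_def P0_def R0_def by auto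
  have R0b: "R0 \<le> P0 + X0" unfolding R0_def P0_def X0_def by (rule rr_bound)
  then have R0sq: "R0\<^sup>2 \<le> (P0 + X0)\<^sup>2" using R00 by (intro power_mono) auto
  have X0sq: "X0\<^sup>2 \<le> (P0 + X0)\<^sup>2" using X00 P00 by (intro power_mono) auto
  have I0: "Inv (q0, qd0) \<le> 2 * (R0\<^sup>2 + X0\<^sup>2)" unfolding R0_def X0_def by (rule inv_bounds(2))
  have In: "Xn\<^sup>2 / 4 \<le> Inv (q, qd)" unfolding Xn_def by (rule inv_bounds(1))
  have Ieq: "Inv (q, qd) = Inv (q0, qd0)" using inv_traj[of q0 qd0 n] tr by simp
  have E: "E = 16 * (P0 + X0)\<^sup>2" unfolding E_def P0_def X0_def by simp
  define Y where "Y = (P0 + X0)\<^sup>2"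
  have R0Y: "R0\<^sup>2 \<le> Y" and X0Y: "X0\<^sup>2 \<le> Y" and EY: "E = 16 * Y" using R0sq X0sq E unfolding Y_def by auto
  have "Xn\<^sup>2 \<le> 8 * (R0\<^sup>2 + X0\<^sup>2)" using In Ieq I0 by (simp add: distrib_left)
  also have "\<dots> \<le> 16 * Y" using R0Y X0Y by (simp add: distrib_left)
  finally have XnE: "Xn\<^sup>2 \<le> E" using EY by simp
  have X0E: "X0\<^sup>2 \<le> E" using X0Y EY Y_def by (simp add: order_trans)
  define G where "G = nA * (1 + c0) * mu + h\<^sup>2 * al\<^sup>2 / 4"
  have G0: "0 \<le> G" unfolding G_def using nA_nonneg c0 mu_nonneg by auto
  have Dn: "\<bar>2 * Ham d w A q qd - Inv (q, qd)\<bar> \<le> G * Xn\<^sup>2" unfolding G_def Xn_def by (rule D_bound)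
  have D0: "\<bar>2 * Ham d w A q0 qd0 - Inv (q0, qd0)\<bar> \<le> G * X0\<^sup>2" unfolding G_def X0_def by (rule D_bound)
  have "G * Xn\<^sup>2 \<le> G * E" using XnE G0 by (rule mult_left_mono)
  moreover have "G * X0\<^sup>2 \<le> G * E" using X0E G0 by (rule mult_left_mono)
  ultimately have H: "\<bar>Ham d w A q qd - Ham d w A q0 qd0\<bar> \<le> G * E" using Dn D0 Ieq by linarith
  define m where "m = min h (1 / om)"
  have m0: "0 \<le> m" unfolding m_def using hpos om_pos by auto
  have E0: "0 \<le> E" unfolding E_def by simp
  define a1 where "a1 = nA * (1 + c0) * (1 + c0 + c1) * E"
  define a2 where "a2 = c0 ^ 4 * nA\<^sup>2 / 4 * E"
  have a10: "0 \<le> a1" unfolding a1_def using nA_nonneg c0 c1 E0 by auto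
  have a20: "0 \<le> a2" unfolding a2_def using E0 by auto
  have GE: "G * E = a1 * m + a2 * h\<^sup>2"
    unfolding G_def a1_def a2_def mu_def m_def al_def by (simp add: algebra_simps power2_eq_square power4_eq_xxxx)
  have KK: "K * m + K * h\<^sup>2 = (a1 + a2) * m + (a1 + a2) * h\<^sup>2"
    unfolding K_def a1_def a2_def by (simp add: algebra_simps)
  have "a1 * m + a2 * h\<^sup>2 \<le> (a1 + a2) * m + (a1 + a2) * h\<^sup>2"
    using a10 a20 m0 by (simp add: algebra_simps)
  then show ?thesis using H GE KK unfolding m_def by linarith
qed

end

lemma final:
  fixes d :: nat and w :: "nat \<Rightarrow> real" and A :: "nat \<Rightarrow> nat \<Rightarrow> complex" and h :: real
    and psi1 phi :: "real \<Rightarrow> real" and c0 c1 :: real and q0 qd0 :: "nat \<Rightarrow> complex" and n :: nat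
  assumes "d \<ge> 1" "\<forall>j<d. w j > 0" "selfadjoint d A" "0 < h" "h \<le> 1"
    "\<forall>x. psi1 x = sinc x * phi x" "c0 \<ge> 0" "c1 \<ge> 0"
    "\<forall>x. \<bar>phi x\<bar> \<le> c0" "\<forall>x. \<bar>phi x - 1\<bar> \<le> c1 * \<bar>x\<bar>"
    "omin d w \<ge> c0\<^sup>2 * opnorm d A / 2 + 1"
  shows "let K = (opnorm d A * (1 + c0) * (1 + c0 + c1) + c0 ^ 4 * (opnorm d A)\<^sup>2 / 4)
                  * (16 * (vnorm d qd0 + vnorm d (Omv w q0))\<^sup>2);
         (q, qd) = traj d w A h psi1 phi q0 qd0 n
     in \<bar>Ham d w A q qd - Ham d w A q0 qd0\<bar> \<le> K * min h (1 / omin d w) + K * h\<^sup>2"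
proof -
  interpret sch d w A h psi1 phi c0 c1
    by unfold_locales (use assms in auto)
  obtain q qd where tr: "traj d w A h psi1 phi q0 qd0 n = (q, qd)"
    by (cases "traj d w A h psi1 phi q0 qd0 n") auto
  show ?thesis unfolding Let_def tr using main[OF tr] by simp
qed

theorem theorem6:
  shows "\<exists>C :: real \<Rightarrow> real \<Rightarrow> real \<Rightarrow> real \<Rightarrow> real \<Rightarrow> real.
    \<forall>(d::nat) (w::nat \<Rightarrow> real) (A::nat \<Rightarrow> nat \<Rightarrow> complex) (h::real) (psi1::real \<Rightarrow> real)
      (phi::real \<Rightarrow> real) (c0::real) (c1::real) (q0::nat \<Rightarrow> complex) (qd0::nat \<Rightarrow> complex) (n::nat).
    d \<ge> 1 \<longrightarrow> (\<forall>j<d. w j > 0) \<longrightarrow> selfadjoint d A \<longrightarrow> 0 < h \<longrightarrow> h \<le> 1 \<longrightarrow>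
    (\<forall>x. psi1 (- x) = psi1 x) \<longrightarrow> (\<forall>x. phi (- x) = phi x) \<longrightarrow>
    (\<forall>x. psi1 x = sinc x * phi x) \<longrightarrow> c0 \<ge> 0 \<longrightarrow> c1 \<ge> 0 \<longrightarrow>
    (\<forall>x. \<bar>psi1 x\<bar> \<le> c0) \<longrightarrow> (\<forall>x. \<bar>phi x\<bar> \<le> c0) \<longrightarrow> (\<forall>x. \<bar>phi x - 1\<bar> \<le> c1 * \<bar>x\<bar>) \<longrightarrow>
    omin d w \<ge> c0\<^sup>2 * opnorm d A / 2 + 1 \<longrightarrow>
    (let K = C c0 c1 (opnorm d A) (vnorm d (Omv w q0)) (vnorm d qd0);
         (q, qd) = traj d w A h psi1 phi q0 qd0 n
     in \<bar>Ham d w A q qd - Ham d w A q0 qd0\<bar> \<le> K * min h (1 / omin d w) + K * h\<^sup>2)"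
  apply (rule exI[of _ "\<lambda>c0 c1 a x p. (a * (1 + c0) * (1 + c0 + c1) + c0 ^ 4 * a\<^sup>2 / 4) * (16 * (p + x)\<^sup>2)"])
  apply (intro allI impI)
  apply (rule final)
            apply assumption+
  done

end
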